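(* Let $\sigma,\tau$ be edge-faces and $[\mathcal{F}],[\mathcal{E}]$ two $\mathrm{PGL}(4)$-classes of tetrahedra of flags. Then $[\mathcal{F}],[\mathcal{E}]$ are $(\sigma,\tau)$-glueable if and only if $t^{\mathcal{F}}_\sigma t^{\mathcal{E}}_\tau=1$. Moreover, if they are $(\sigma,\tau)$-glueable then they are $(\sigma',\tau')$-glueable for all $\sigma'\in\{\sigma,\sigma_+,\sigma_-\}$ and $\tau'\in\{\tau,\tau_+,\tau_-\}$.
   Context: Flags: $(V,\eta)$, $\eta$ a plane of $\mathbb{RP}^3$ through $V$; $\mathrm{PGL}(4)$ acts diagonally. A tetrahedron of flags is a non-degenerate ($\eta_i(V_j)=0\iff i=j$) ordered quadruple $(V_m,\eta_m)_{m=1}^4$ with $V_m$ not coplanar such that some projective tetrahedron with vertices $V_m$ has interior disjoint from all $\eta_m$. Edge-faces $\sigma=(ij)k$ are even permutations $[ijkl]$ of $\{1,2,3,4\}$; $\sigma_+=(ki)j$, $\sigma_-=(jk)i$. Triple ratio $t_\sigma=t_{ijk}=\frac{\bar\eta_i(\bar V_j)\bar\eta_j(\bar V_k)\bar\eta_k(\bar V_i)}{\bar\eta_i(\bar V_k)\bar\eta_j(\bar V_i)\bar\eta_k(\bar V_j)}$. Two tetrahedra of flags $\mathcal{F}=(V_m,\eta_m)$, $\mathcal{E}=(W_m,\zeta_m)$ are glued along $(\sigma,\tau)$, with $\sigma=(ij)k$, $\tau=(i'j')k'$, if $(V_i,\eta_i)=(W_{j'},\zeta_{j'})$, $(V_j,\eta_j)=(W_{i'},\zeta_{i'})$,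 $(V_k,\eta_k)=(W_{k'},\zeta_{k'})$. Two classes are $(\sigma,\tau)$-glueable if they have representatives glued along $(\sigma,\tau)$. *)

theory Defs
  imports "HOL-Analysis.Analysis" "HOL-Combinatorics.Permutations"
begin

(* Points of RP^3 are represented by nonzero lifts in real^4, planes by nonzero
   covectors in real^4 (eta(V) = eta \<bullet> V).  A quadruple of flags is a map
   nat \<Rightarrow> (point lift, plane lift); only indices 1..4 are relevant. *)

type_synonym vec4 = "real ^ 4"
type_synonym flagquad = "nat \<Rightarrow> vec4 \<times> vec4"

definition pt :: "flagquad \<Rightarrow> nat \<Rightarrow> vec4" where "pt F m = fst (F m)"
definition pl :: "flagquad \<Rightarrow> nat \<Rightarrow> vec4" where "pl F m = snd (F m)"

definition proj_eq :: "vec4 \<Rightarrow> vec4 \<Rightarrow> bool" where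
  "proj_eq x y \<longleftrightarrow> x \<noteq> 0 \<and> (\<exists>c. c \<noteq> 0 \<and> y = c *\<^sub>R x)"

definition flag_eq :: "vec4 \<times> vec4 \<Rightarrow> vec4 \<times> vec4 \<Rightarrow> bool" where
  "flag_eq f g \<longleftrightarrow> proj_eq (fst f) (fst g) \<and> proj_eq (snd f) (snd g)"

definition tetrahedron_of_flags :: "flagquad \<Rightarrow> bool" where
  "tetrahedron_of_flags F \<longleftrightarrow>
     (\<forall>i\<in>{1..4}. \<forall>j\<in>{1..4}. (pl F i \<bullet> pt F j = 0 \<longleftrightarrow> i = j)) \<and>
     (\<forall>m\<in>{1..4}. pt F m \<noteq> 0 \<and> pl F m \<noteq> 0) \<and>
     \<not> dependent (pt F ` {1..4}) \<and> inj_on (pt F) {1..4} \<and>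
     (\<exists>s::nat \<Rightarrow> real. (\<forall>m\<in>{1..4}. s m = 1 \<or> s m = -1) \<and>
        (\<forall>n\<in>{1..4}. \<forall>c::nat \<Rightarrow> real. (\<forall>m\<in>{1..4}. c m > 0) \<longrightarrow>
            pl F n \<bullet> (\<Sum>m\<in>{1..4}. (c m * s m) *\<^sub>R pt F m) \<noteq> 0))"

(* PGL(4) acting diagonally: V \<mapsto> A V, eta \<mapsto> eta \<circ> A^{-1} *)
definition pgl_act :: "real^4^4 \<Rightarrow> flagquad \<Rightarrow> flagquad" where
  "pgl_act A F = (\<lambda>m. (A *v pt F m, transpose (matrix_inv A) *v pl F m))"

definition pgl_equiv :: "flagquad \<Rightarrow> flagquad \<Rightarrow> bool" where
  "pgl_equiv F F' \<longleftrightarrow> (\<exists>A::real^4^4. invertible A \<and>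
      (\<forall>m\<in>{1..4}. flag_eq (pgl_act A F m) (F' m)))"

definition edge_face :: "nat \<times> nat \<times> nat \<Rightarrow> bool" where
  "edge_face \<sigma> \<longleftrightarrow> (case \<sigma> of (i, j, k) \<Rightarrow>
      \<exists>p. p permutes {1..4} \<and> evenperm p \<and> p 1 = i \<and> p 2 = j \<and> p 3 = k)"

definition ef_plus :: "nat \<times> nat \<times> nat \<Rightarrow> nat \<times> nat \<times> nat" where
  "ef_plus \<sigma> = (case \<sigma> of (i, j, k) \<Rightarrow> (k, i, j))"
definition ef_minus :: "nat \<times> nat \<times> nat \<Rightarrow> nat \<times> nat \<times> nat" where
  "ef_minus \<sigma> = (case \<sigma> of (i, j, k) \<Rightarrow> (j, k, i))"

definition triple_ratio :: "flagquad \<Rightarrow> nat \<times> nat \<times> nat \<Rightarrow> real" where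
  "triple_ratio F \<sigma> = (case \<sigma> of (i, j, k) \<Rightarrow>
     ((pl F i \<bullet> pt F j) * (pl F j \<bullet> pt F k) * (pl F k \<bullet> pt F i)) /
     ((pl F i \<bullet> pt F k) * (pl F j \<bullet> pt F i) * (pl F k \<bullet> pt F j)))"

definition glued :: "flagquad \<Rightarrow> flagquad \<Rightarrow> nat \<times> nat \<times> nat \<Rightarrow> nat \<times> nat \<times> nat \<Rightarrow> bool" where
  "glued F E \<sigma> \<tau> \<longleftrightarrow> (case \<sigma> of (i, j, k) \<Rightarrow> case \<tau> of (i', j', k') \<Rightarrow>
      flag_eq (F i) (E j') \<and> flag_eq (F j) (E i') \<and> flag_eq (F k) (E k'))"

definition glueable :: "flagquad \<Rightarrow> flagquad \<Rightarrow> nat \<times> nat \<times> nat \<Rightarrow> nat \<times> nat \<times> nat \<Rightarrow> bool" where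
  "glueable F E \<sigma> \<tau> \<longleftrightarrow> (\<exists>F' E'. pgl_equiv F F' \<and> pgl_equiv E E' \<and> glued F' E' \<sigma> \<tau>)"

end

theory Submission
  imports Defs
begin


lemma inv_props:
  fixes A :: "real^4^4"
  assumes "invertible A"
  shows "A ** matrix_inv A = mat 1" "matrix_inv A ** A = mat 1"
  using someI_ex[OF assms[unfolded invertible_def]] unfolding matrix_inv_def by auto

definition cols4 :: "vec4 \<Rightarrow> vec4 \<Rightarrow> vec4 \<Rightarrow> vec4 \<Rightarrow> real^4^4" where
  "cols4 p1 p2 p3 p4 = (\<chi> i j. if j = 1 then p1$i else if j = 2 then p2$i else if j = 3 then p3$i else p4$i)"

lemma cols4_mult: "cols4 p1 p2 p3 p4 *v x = (x$1) *\<^sub>R p1 + (x$2) *\<^sub>R p2 + (x$3) *\<^sub>R p3 + (x$4) *\<^sub>R p4"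
  by (simp add: cols4_def vec_eq_iff matrix_vector_mult_def sum_4 algebra_simps)

lemma vm_cols4: "(z v* cols4 p1 p2 p3 p4) $ 1 = z \<bullet> p1" "(z v* cols4 p1 p2 p3 p4) $ 2 = z \<bullet> p2"
  "(z v* cols4 p1 p2 p3 p4) $ 3 = z \<bullet> p3" "(z v* cols4 p1 p2 p3 p4) $ 4 = z \<bullet> p4"
  by (simp_all add: cols4_def vector_matrix_mult_def sum_4 inner_vec_def mult.commute)

lemma cols4_zero:
  assumes "invertible (cols4 p1 p2 p3 p4)" "z \<bullet> p1 = 0" "z \<bullet> p2 = 0" "z \<bullet> p3 = 0" "z \<bullet> p4 = 0"
  shows "z = 0"
proof -
  let ?M = "cols4 p1 p2 p3 p4"
  have "z v* ?M = 0" using assms by (simp add: vec_eq_iff forall_4 vm_cols4)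
  then have z0: "(z v* ?M) v* matrix_inv ?M = 0" by (simp add: vec_eq_iff vector_matrix_mult_def)
  have "z = z v* mat 1" by simp
  also have "\<dots> = z v* (?M ** matrix_inv ?M)" by (simp only: inv_props(1)[OF assms(1)])
  also have "\<dots> = (z v* ?M) v* matrix_inv ?M" by (simp only: vector_matrix_mul_assoc)
  also have "\<dots> = 0" by (rule z0)
  finally show ?thesis .
qed

lemma cols4_inv:
  assumes "\<And>x1 x2 x3 x4. x1 *\<^sub>R p1 + x2 *\<^sub>R p2 + x3 *\<^sub>R p3 + x4 *\<^sub>R p4 = 0 \<Longrightarrow> x1 = 0 \<and> x2 = 0 \<and> x3 = 0 \<and> x4 = 0"
  shows "invertible (cols4 p1 p2 p3 p4)"
proof -
  have "\<forall>x. cols4 p1 p2 p3 p4 *v x = 0 \<longrightarrow> x = 0"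
  proof (intro allI impI)
    fix x :: vec4 assume "cols4 p1 p2 p3 p4 *v x = 0"
    then have "x$1 *\<^sub>R p1 + x$2 *\<^sub>R p2 + x$3 *\<^sub>R p3 + x$4 *\<^sub>R p4 = 0" by (simp only: cols4_mult)
    then have "x$1 = 0 \<and> x$2 = 0 \<and> x$3 = 0 \<and> x$4 = 0" by (rule assms)
    then show "x = 0" by (simp add: vec_eq_iff forall_4)
  qed
  then have "\<exists>B. B ** cols4 p1 p2 p3 p4 = mat 1" by (simp only: matrix_left_invertible_ker)
  then show ?thesis by (simp only: invertible_left_inverse)
qed

lemma cols4_axis: "cols4 p1 p2 p3 p4 *v axis 1 1 = p1" "cols4 p1 p2 p3 p4 *v axis 2 1 = p2"
  "cols4 p1 p2 p3 p4 *v axis 3 1 = p3" "cols4 p1 p2 p3 p4 *v axis 4 1 = p4"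
  by (simp_all add: cols4_mult axis_def)

lemma inv_apply: assumes "invertible (M::real^4^4)" "M *v e = w" shows "matrix_inv M *v w = e"
  using assms inv_props[OF assms(1)] by (metis matrix_vector_mul_assoc matrix_vector_mul_lid)




lemma solve_coeffs:
  fixes p q r g t w Zab Zac Zba Zbc Zca Zcb had hbd hcd Zad Zbd Zcd :: real
  assumes nz: "p\<noteq>0" "q\<noteq>0" "r\<noteq>0" "g\<noteq>0" "t\<noteq>0" "w\<noteq>0"
    "Zab\<noteq>0" "Zac\<noteq>0" "Zba\<noteq>0" "Zbc\<noteq>0" "Zca\<noteq>0" "Zcb\<noteq>0"
  and tr: "p*g*t*(Zba*Zac*Zcb) = q*r*w*(Zbc*Zab*Zca)"
  and det: "p*g*t + q*r*w \<noteq> 0"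
  obtains la lb lc ma mb mc ua ub uc where "la\<noteq>0" "lb\<noteq>0" "lc\<noteq>0" "ma\<noteq>0" "mb\<noteq>0" "mc\<noteq>0"
    "Zab = ma*lb*p" "Zac = ma*lc*q" "Zba = mb*la*r" "Zbc = mb*lc*g" "Zca = mc*la*t" "Zcb = mc*lb*w"
    "Zad = ma*(ub*p + uc*q + had)" "Zbd = mb*(ua*r + uc*g + hbd)" "Zcd = mc*(ua*t + ub*w + hcd)"
proof -
  define la where "la = (1::real)"
  define mb where "mb = Zba / r"
  define mc where "mc = Zca / t"
  define lb where "lb = Zcb / (mc * w)"
  define lc where "lc = Zbc / (mb * g)"
  define ma where "ma = Zab / (lb * p)"
  define ra where "ra = Zad / ma - had"
  define rb where "rb = Zbd / mb - hbd"
  define rc where "rc = Zcd / mc - hcd"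
  define D where "D = p*g*t + q*r*w"
  define ua where "ua = (- g*w*ra + q*w*rb + p*g*rc) / D"
  define ub where "ub = (g*t*ra - q*t*rb + q*r*rc) / D"
  define uc where "uc = (r*w*ra + p*t*rb - p*r*rc) / D"
  have nz2: "mb\<noteq>0" "mc\<noteq>0" "lb\<noteq>0" "lc\<noteq>0" "ma\<noteq>0" "la \<noteq> 0" "D \<noteq> 0"
    using nz det by (simp_all add: mb_def mc_def lb_def lc_def ma_def la_def D_def)
  have e1: "Zab = ma*lb*p" using nz2 nz by (simp add: ma_def)
  have e3: "Zba = mb*la*r" using nz by (simp add: mb_def la_def)
  have e4: "Zbc = mb*lc*g" using nz2 nz by (simp add: lc_def)
  have e5: "Zca = mc*la*t" using nz by (simp add: mc_def la_def)
  have e6: "Zcb = mc*lb*w" using nz2 nz by (simp add: lb_def)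
  have e2: "Zac = ma*lc*q"
  proof -
    have "ma*lc*q = Zab*Zbc*q*mc*w / (Zcb*p*mb*g)"
      using nz2 nz by (simp add: ma_def lb_def lc_def field_simps)
    also have "\<dots> = Zab*Zbc*q*Zca*w*r / (Zcb*p*Zba*g*t)"
      using nz2 nz by (simp add: mb_def mc_def field_simps)
    also have "\<dots> = Zac" using nz tr by (simp add: field_simps)
    finally show ?thesis by simp
  qed
  have u1: "ub*p + uc*q = ra"
  proof -
    have "ub*p + uc*q = ((g*t*ra - q*t*rb + q*r*rc)*p + (r*w*ra + p*t*rb - p*r*rc)*q)/D"
      unfolding ub_def uc_def by (simp only: times_divide_eq_left add_divide_distrib[symmetric] diff_divide_distrib[symmetric])
    also have "\<dots> = (ra*D)/D" by (simp add: D_def algebra_simps)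
    finally show ?thesis using nz2 by simp
  qed
  have u2: "ua*r + uc*g = rb"
  proof -
    have "ua*r + uc*g = ((- g*w*ra + q*w*rb + p*g*rc)*r + (r*w*ra + p*t*rb - p*r*rc)*g)/D"
      unfolding ua_def uc_def by (simp only: times_divide_eq_left add_divide_distrib[symmetric] diff_divide_distrib[symmetric])
    also have "\<dots> = (rb*D)/D" by (simp add: D_def algebra_simps)
    finally show ?thesis using nz2 by simp
  qed
  have u3: "ua*t + ub*w = rc"
  proof -
    have "ua*t + ub*w = ((- g*w*ra + q*w*rb + p*g*rc)*t + (g*t*ra - q*t*rb + q*r*rc)*w)/D"
      unfolding ua_def ub_def by (simp only: times_divide_eq_left add_divide_distrib[symmetric] diff_divide_distrib[symmetric])
    also have "\<dots> = (rc*D)/D" by (simp add: D_def algebra_simps)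
    finally show ?thesis using nz2 by simp
  qed
  have z1: "Zad = ma*(ub*p + uc*q + had)" using u1 nz2 by (simp add: ra_def)
  have z2: "Zbd = mb*(ua*r + uc*g + hbd)" using u2 nz2 by (simp add: rb_def)
  have z3: "Zcd = mc*(ua*t + ub*w + hcd)" using u3 nz2 by (simp add: rc_def)
  show thesis
    by (rule that[of la lb lc ma mb mc ub uc ua, OF nz2(6) nz2(3) nz2(4) nz2(5) nz2(1) nz2(2) e1 e2 e3 e4 e5 e6 z1 z2 z3])
qed




lemma plane_match:
  assumes B: "invertible (B::real^4^4)" and M: "invertible (cols4 W1 W2 W3 W4)"
    and "z \<bullet> W1 = m * (e \<bullet> (B *v W1))" "z \<bullet> W2 = m * (e \<bullet> (B *v W2))"
    "z \<bullet> W3 = m * (e \<bullet> (B *v W3))" "z \<bullet> W4 = m * (e \<bullet> (B *v W4))"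
  shows "transpose (matrix_inv B) *v z = m *\<^sub>R e"
proof -
  have "z - m *\<^sub>R (e v* B) = 0"
    by (rule cols4_zero[OF M]) (simp_all add: inner_diff_left dot_lmul_matrix assms)
  then have z: "z = m *\<^sub>R (e v* B)" by simp
  have "transpose (matrix_inv B) *v z = m *\<^sub>R ((e v* B) v* matrix_inv B)"
    by (simp add: z vec_eq_iff vector_matrix_mult_def sum_distrib_left algebra_simps)
  also have "\<dots> = m *\<^sub>R e" by (simp add: vector_matrix_mul_assoc inv_props(1)[OF B])
  finally show ?thesis .
qed

lemma exists_B:
  fixes Va Vb Vc Vd Wa Wb Wc Wd ea eb ec za zb zc :: vec4
  assumes indV: "\<And>x1 x2 x3 x4. x1 *\<^sub>R Va + x2 *\<^sub>R Vb + x3 *\<^sub>R Vc + x4 *\<^sub>R Vd = 0 \<Longrightarrow> x1 = 0 \<and> x2 = 0 \<and> x3 = 0 \<and> x4 = 0"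
    and indW: "\<And>x1 x2 x3 x4. x1 *\<^sub>R Wa + x2 *\<^sub>R Wb + x3 *\<^sub>R Wc + x4 *\<^sub>R Wd = 0 \<Longrightarrow> x1 = 0 \<and> x2 = 0 \<and> x3 = 0 \<and> x4 = 0"
    and nz: "la \<noteq> 0" "lb \<noteq> 0" "lc \<noteq> 0"
    and Ua: "za \<bullet> Wa = ma*la*(ea \<bullet> Va)" "za \<bullet> Wb = ma*lb*(ea \<bullet> Vb)" "za \<bullet> Wc = ma*lc*(ea \<bullet> Vc)"
       "za \<bullet> Wd = ma*(ea \<bullet> (ua *\<^sub>R Va + ub *\<^sub>R Vb + uc *\<^sub>R Vc + Vd))"
    and Ub: "zb \<bullet> Wa = mb*la*(eb \<bullet> Va)" "zb \<bullet> Wb = mb*lb*(eb \<bullet> Vb)" "zb \<bullet> Wc = mb*lc*(eb \<bullet> Vc)"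
       "zb \<bullet> Wd = mb*(eb \<bullet> (ua *\<^sub>R Va + ub *\<^sub>R Vb + uc *\<^sub>R Vc + Vd))"
    and Uc: "zc \<bullet> Wa = mc*la*(ec \<bullet> Va)" "zc \<bullet> Wb = mc*lb*(ec \<bullet> Vb)" "zc \<bullet> Wc = mc*lc*(ec \<bullet> Vc)"
       "zc \<bullet> Wd = mc*(ec \<bullet> (ua *\<^sub>R Va + ub *\<^sub>R Vb + uc *\<^sub>R Vc + Vd))"
  shows "\<exists>B. invertible B \<and> B *v Wa = la *\<^sub>R Va \<and> B *v Wb = lb *\<^sub>R Vb \<and> B *v Wc = lc *\<^sub>R Vc \<and>
     transpose (matrix_inv B) *v za = ma *\<^sub>R ea \<and> transpose (matrix_inv B) *v zb = mb *\<^sub>R eb \<and>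
     transpose (matrix_inv B) *v zc = mc *\<^sub>R ec"
proof -
  define U where "U = ua *\<^sub>R Va + ub *\<^sub>R Vb + uc *\<^sub>R Vc + Vd"
  define M where "M = cols4 Wa Wb Wc Wd"
  define N where "N = cols4 (la *\<^sub>R Va) (lb *\<^sub>R Vb) (lc *\<^sub>R Vc) U"
  define B where "B = N ** matrix_inv M"
  have M: "invertible M" unfolding M_def by (rule cols4_inv[OF indW])
  have N: "invertible N" unfolding N_def
  proof (rule cols4_inv)
    fix x1 x2 x3 x4 :: real
    assume "x1 *\<^sub>R la *\<^sub>R Va + x2 *\<^sub>R lb *\<^sub>R Vb + x3 *\<^sub>R lc *\<^sub>R Vc + x4 *\<^sub>R U = 0"
    then have "(x1*la + x4*ua) *\<^sub>R Va + (x2*lb + x4*ub) *\<^sub>R Vb + (x3*lc + x4*uc) *\<^sub>R Vc + x4 *\<^sub>R Vd = 0"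
      by (simp add: U_def algebra_simps)
    from indV[OF this] nz show "x1 = 0 \<and> x2 = 0 \<and> x3 = 0 \<and> x4 = 0" by auto
  qed
  have iM: "invertible (matrix_inv M)" using inv_props[OF M] invertible_def by blast
  have B: "invertible B" unfolding B_def by (rule invertible_mult[OF N iM])
  have app: "B *v (M *v e) = N *v e" for e
    unfolding B_def by (metis inv_props(2)[OF M] matrix_vector_mul_assoc matrix_vector_mul_lid)
  have Ba: "B *v Wa = la *\<^sub>R Va" using app[of "axis 1 1"] by (simp add: M_def N_def cols4_axis)
  have Bb: "B *v Wb = lb *\<^sub>R Vb" using app[of "axis 2 1"] by (simp add: M_def N_def cols4_axis)
  have Bc: "B *v Wc = lc *\<^sub>R Vc" using app[of "axis 3 1"] by (simp add: M_def N_def cols4_axis)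
  have Bd: "B *v Wd = U" using app[of "axis 4 1"] by (simp add: M_def N_def cols4_axis)
  have M': "invertible (cols4 Wa Wb Wc Wd)" using M by (simp add: M_def)
  have "transpose (matrix_inv B) *v za = ma *\<^sub>R ea"
    by (rule plane_match[OF B M']) (simp_all add: Ba Bb Bc Bd Ua U_def[symmetric])
  moreover have "transpose (matrix_inv B) *v zb = mb *\<^sub>R eb"
    by (rule plane_match[OF B M']) (simp_all add: Ba Bb Bc Bd Ub U_def[symmetric])
  moreover have "transpose (matrix_inv B) *v zc = mc *\<^sub>R ec"
    by (rule plane_match[OF B M']) (simp_all add: Ba Bb Bc Bd Uc U_def[symmetric])
  ultimately show ?thesis using B Ba Bb Bc by blast
qed




lemma tet_nondeg:
  assumes "tetrahedron_of_flags F" "i \<in> {1..4}" "j \<in> {1..4}"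
  shows "pl F i \<bullet> pt F j = 0 \<longleftrightarrow> i = j"
  using assms unfolding tetrahedron_of_flags_def by blast

lemma tet_nz:
  assumes "tetrahedron_of_flags F" "m \<in> {1..4}"
  shows "pt F m \<noteq> 0" "pl F m \<noteq> 0"
  using assms unfolding tetrahedron_of_flags_def by blast+

lemma tet_indep:
  assumes T: "tetrahedron_of_flags F" and S: "{1..4} = {a,b,c,d::nat}"
    and dist: "a\<noteq>b" "a\<noteq>c" "a\<noteq>d" "b\<noteq>c" "b\<noteq>d" "c\<noteq>d"
    and eq: "x1 *\<^sub>R pt F a + x2 *\<^sub>R pt F b + x3 *\<^sub>R pt F c + x4 *\<^sub>R pt F d = 0"
  shows "x1 = 0 \<and> x2 = 0 \<and> x3 = 0 \<and> x4 = 0"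
proof -
  define cf where "cf m = (if m = a then x1 else if m = b then x2 else if m = c then x3 else x4)" for m
  have nd: "\<not> dependent (pt F ` {1..4})" and inj: "inj_on (pt F) {1..4}"
    using T unfolding tetrahedron_of_flags_def by blast+
  define u where "u v = cf (inv_into {1..4} (pt F) v)" for v
  have "(\<Sum>v\<in>pt F ` {1..4}. u v *\<^sub>R v) = (\<Sum>m\<in>{1..4}. u (pt F m) *\<^sub>R pt F m)"
    by (rule sum.reindex[OF inj, unfolded comp_def])
  also have "\<dots> = (\<Sum>m\<in>{1..4}. cf m *\<^sub>R pt F m)"
    by (intro sum.cong refl) (metis u_def inv_into_f_f[OF inj])
  also have "\<dots> = x1 *\<^sub>R pt F a + x2 *\<^sub>R pt F b + x3 *\<^sub>R pt F c + x4 *\<^sub>R pt F d"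
    unfolding S using dist by (simp add: cf_def algebra_simps)
  finally have sumz: "(\<Sum>v\<in>pt F ` {1..4}. u v *\<^sub>R v) = 0" using eq by simp
  have "\<forall>v\<in>pt F ` {1..4}. u v = 0"
    using nd sumz dependent_finite[of "pt F ` {1..4}"] by auto
  then have cz: "cf m = 0" if "m\<in>{1..4}" for m
  proof -
    have "u (pt F m) = 0" using \<open>\<forall>v\<in>pt F ` {1..4}. u v = 0\<close> that by blast
    moreover have "u (pt F m) = cf m" unfolding u_def using inv_into_f_f[OF inj that] by simp
    ultimately show ?thesis by simp
  qed
  have "a \<in> {1..4}" "b \<in> {1..4}" "c \<in> {1..4}" "d \<in> {1..4}" unfolding S by simp_all
  then have "cf a = 0" "cf b = 0" "cf c = 0" "cf d = 0" using cz by simp_all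
  then show ?thesis using dist by (simp add: cf_def)
qed

lemma tet_sign:
  assumes T: "tetrahedron_of_flags F"
  shows "\<exists>s. (\<forall>m\<in>{1..4}. s m = 1 \<or> s m = -1) \<and>
    (\<forall>n\<in>{1..4}. \<forall>m1\<in>{1..4}. \<forall>m2\<in>{1..4}. m1 \<noteq> n \<longrightarrow> m2 \<noteq> n \<longrightarrow>
        (pl F n \<bullet> pt F m1) * s m1 * ((pl F n \<bullet> pt F m2) * s m2) > 0)"
proof -
  obtain s where s1: "\<forall>m\<in>{1..4}. s m = 1 \<or> s m = -1" and
    s2: "\<forall>n\<in>{1..4}. \<forall>c::nat \<Rightarrow> real. (\<forall>m\<in>{1..4}. c m > 0) \<longrightarrow>
            pl F n \<bullet> (\<Sum>m\<in>{1..4}. (c m * s m) *\<^sub>R pt F m) \<noteq> 0"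
  proof -
    have "\<exists>s::nat \<Rightarrow> real. (\<forall>m\<in>{1..4}. s m = 1 \<or> s m = -1) \<and>
        (\<forall>n\<in>{1..4}. \<forall>c::nat \<Rightarrow> real. (\<forall>m\<in>{1..4}. c m > 0) \<longrightarrow>
            pl F n \<bullet> (\<Sum>m\<in>{1..4}. (c m * s m) *\<^sub>R pt F m) \<noteq> 0)"
      using T unfolding tetrahedron_of_flags_def by (elim conjE)
    then show ?thesis using that by blast
  qed
  have "(pl F n \<bullet> pt F m1) * s m1 * ((pl F n \<bullet> pt F m2) * s m2) > 0"
    if n: "n\<in>{1..4}" and m1: "m1\<in>{1..4}" and m2: "m2\<in>{1..4}" and "m1 \<noteq> n" "m2 \<noteq> n" for n m1 m2
  proof (rule ccontr)
    define x where "x = (pl F n \<bullet> pt F m1) * s m1"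
    define y where "y = (pl F n \<bullet> pt F m2) * s m2"
    assume "\<not> ?thesis"
    then have xy: "x * y \<le> 0" by (simp add: x_def y_def)
    have sm: "s m \<noteq> 0" if "m \<in> {1..4}" for m using s1 that by force
    have x0: "x \<noteq> 0" using tet_nondeg[OF T n m1] \<open>m1 \<noteq> n\<close> sm[OF m1] by (simp add: x_def)
    have y0: "y \<noteq> 0" using tet_nondeg[OF T n m2] \<open>m2 \<noteq> n\<close> sm[OF m2] by (simp add: y_def)
    have neq: "m1 \<noteq> m2"
    proof
      assume "m1 = m2" then have "x = y" by (simp add: x_def y_def)
      then have "x * x \<le> 0" using xy by simp
      moreover have "x * x > 0" using x0 not_real_square_gt_zero[of x] by blast
      ultimately show False by linarith
    qed
    have "x * y \<noteq> 0" using x0 y0 by simp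
    then have xy': "x * y < 0" using xy by linarith
    define z where "z = (\<Sum>m\<in>{1..4} - {m1} - {m2}. s m * (pl F n \<bullet> pt F m))"
    obtain c1 c2 where c: "c1 > 0" "c2 > 0" "c1 * x + c2 * y + z = 0"
    proof (cases "x > 0")
      case True
      then have yn: "y < 0" using xy' by (simp add: mult_less_0_iff)
      define c1 where "c1 = (\<bar>z\<bar> + 1) / x"
      define c2 where "c2 = (- z - (\<bar>z\<bar> + 1)) / y"
      have p1: "c1 > 0" unfolding c1_def using True by (intro divide_pos_pos) auto
      have p2: "c2 > 0" unfolding c2_def using yn by (intro divide_neg_neg) auto
      have e1: "c1 * x = \<bar>z\<bar> + 1" unfolding c1_def using x0 by simp
      have e2: "c2 * y = - z - (\<bar>z\<bar> + 1)" unfolding c2_def using y0 by simp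
      show ?thesis by (rule that[OF p1 p2]) (use e1 e2 in linarith)
    next
      case False
      then have xn: "x < 0" using x0 by simp
      then have yp: "y > 0" using xy' by (simp add: mult_less_0_iff)
      define c1 where "c1 = (\<bar>z\<bar> + 1) / (-x)"
      define c2 where "c2 = (- z + (\<bar>z\<bar> + 1)) / y"
      have p1: "c1 > 0" unfolding c1_def using xn by (intro divide_pos_pos) auto
      have p2: "c2 > 0" unfolding c2_def using yp by (intro divide_pos_pos) auto
      have e1: "c1 * x = - (\<bar>z\<bar> + 1)" unfolding c1_def using x0 by simp
      have e2: "c2 * y = - z + (\<bar>z\<bar> + 1)" unfolding c2_def using y0 by simp
      show ?thesis by (rule that[OF p1 p2]) (use e1 e2 in linarith)
    qed
    define cf where "cf m = (if m = m1 then c1 else if m = m2 then c2 else 1)" for m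
    have cpos: "\<forall>m\<in>{1..4}. cf m > 0" using c by (simp add: cf_def)
    have "pl F n \<bullet> (\<Sum>m\<in>{1..4}. (cf m * s m) *\<^sub>R pt F m) = (\<Sum>m\<in>{1..4}. cf m * s m * (pl F n \<bullet> pt F m))"
      by (simp add: inner_sum_right)
    also have "\<dots> = cf m1 * s m1 * (pl F n \<bullet> pt F m1) + (\<Sum>m\<in>{1..4} - {m1}. cf m * s m * (pl F n \<bullet> pt F m))"
      by (rule sum.remove) (use m1 in auto)
    also have "(\<Sum>m\<in>{1..4} - {m1}. cf m * s m * (pl F n \<bullet> pt F m)) =
        cf m2 * s m2 * (pl F n \<bullet> pt F m2) + (\<Sum>m\<in>{1..4} - {m1} - {m2}. cf m * s m * (pl F n \<bullet> pt F m))"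
      by (rule sum.remove) (use m2 neq in auto)
    also have "(\<Sum>m\<in>{1..4} - {m1} - {m2}. cf m * s m * (pl F n \<bullet> pt F m)) = z"
      unfolding z_def by (rule sum.cong) (auto simp: cf_def)
    finally have "pl F n \<bullet> (\<Sum>m\<in>{1..4}. (cf m * s m) *\<^sub>R pt F m) = c1 * x + c2 * y + z"
      using neq by (simp add: cf_def x_def y_def mult.assoc)
    moreover have "pl F n \<bullet> (\<Sum>m\<in>{1..4}. (cf m * s m) *\<^sub>R pt F m) \<noteq> 0"
      using s2 n cpos by blast
    ultimately show False using c(3) by simp
  qed
  with s1 show ?thesis by blast
qed

lemma tet_det:
  assumes T: "tetrahedron_of_flags F" and abc: "a\<in>{1..4}" "b\<in>{1..4}" "c\<in>{1..4}" "a\<noteq>b" "a\<noteq>c" "b\<noteq>c"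
  shows "(pl F a \<bullet> pt F b) * (pl F b \<bullet> pt F c) * (pl F c \<bullet> pt F a) *
         ((pl F a \<bullet> pt F c) * (pl F c \<bullet> pt F b) * (pl F b \<bullet> pt F a)) > 0"
proof -
  obtain s where s1: "\<forall>m\<in>{1..4}. s m = 1 \<or> s m = -1" and
    s2: "\<forall>n\<in>{1..4}. \<forall>m1\<in>{1..4}. \<forall>m2\<in>{1..4}. m1 \<noteq> n \<longrightarrow> m2 \<noteq> n \<longrightarrow>
        (pl F n \<bullet> pt F m1) * s m1 * ((pl F n \<bullet> pt F m2) * s m2) > 0"
    using tet_sign[OF T] by blast
  have A: "(pl F a \<bullet> pt F b) * s b * ((pl F a \<bullet> pt F c) * s c) > 0" using s2 abc by auto
  have B: "(pl F b \<bullet> pt F c) * s c * ((pl F b \<bullet> pt F a) * s a) > 0" using s2 abc by auto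
  have C: "(pl F c \<bullet> pt F a) * s a * ((pl F c \<bullet> pt F b) * s b) > 0" using s2 abc by auto
  have sq: "s m * s m = 1" if "m \<in> {1..4}" for m using s1 that by force
  have "0 < ((pl F a \<bullet> pt F b) * s b * ((pl F a \<bullet> pt F c) * s c)) *
          ((pl F b \<bullet> pt F c) * s c * ((pl F b \<bullet> pt F a) * s a)) *
          ((pl F c \<bullet> pt F a) * s a * ((pl F c \<bullet> pt F b) * s b))"
    using A B C by simp
  also have "\<dots> = (pl F a \<bullet> pt F b) * (pl F b \<bullet> pt F c) * (pl F c \<bullet> pt F a) *
         ((pl F a \<bullet> pt F c) * (pl F c \<bullet> pt F b) * (pl F b \<bullet> pt F a)) * ((s a * s a) * (s b * s b) * (s c * s c))"
    by (simp add: algebra_simps)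
  finally show ?thesis using sq abc by simp
qed




lemma pgl_dot:
  assumes "invertible A"
  shows "pl (pgl_act A F) x \<bullet> pt (pgl_act A F) y = pl F x \<bullet> pt F y"
proof -
  have "pl (pgl_act A F) x \<bullet> pt (pgl_act A F) y = (pl F x v* matrix_inv A) \<bullet> (A *v pt F y)"
    by (simp add: pgl_act_def pl_def pt_def)
  also have "\<dots> = pl F x \<bullet> (matrix_inv A *v (A *v pt F y))" by (rule dot_lmul_matrix)
  also have "\<dots> = pl F x \<bullet> pt F y" by (simp add: matrix_vector_mul_assoc inv_props(2)[OF assms])
  finally show ?thesis .
qed

lemma tr_pgl: "invertible A \<Longrightarrow> triple_ratio (pgl_act A F) \<sigma> = triple_ratio F \<sigma>"
  by (cases \<sigma>) (simp add: triple_ratio_def pgl_dot)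

lemma div_cancel_real: "(K::real) \<noteq> 0 \<Longrightarrow> (K * n) / (K * d) = n / d" by simp

lemma tr_scale:
  assumes "proj_eq (pt G a) (pt H a')" "proj_eq (pl G a) (pl H a')"
    "proj_eq (pt G b) (pt H b')" "proj_eq (pl G b) (pl H b')"
    "proj_eq (pt G c) (pt H c')" "proj_eq (pl G c) (pl H c')"
  shows "triple_ratio H (a', b', c') = triple_ratio G (a, b, c)"
proof -
  obtain xa ya xb yb xc yc where nz: "xa\<noteq>0" "ya\<noteq>0" "xb\<noteq>0" "yb\<noteq>0" "xc\<noteq>0" "yc\<noteq>0" and
    e: "pt H a' = xa *\<^sub>R pt G a" "pl H a' = ya *\<^sub>R pl G a"
       "pt H b' = xb *\<^sub>R pt G b" "pl H b' = yb *\<^sub>R pl G b"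
       "pt H c' = xc *\<^sub>R pt G c" "pl H c' = yc *\<^sub>R pl G c"
    using assms unfolding proj_eq_def by metis
  define K where "K = xa*ya*xb*yb*xc*yc"
  have K: "K \<noteq> 0" using nz by (simp add: K_def)
  have "triple_ratio H (a', b', c') =
     (K * ((pl G a \<bullet> pt G b) * (pl G b \<bullet> pt G c) * (pl G c \<bullet> pt G a))) /
     (K * ((pl G a \<bullet> pt G c) * (pl G b \<bullet> pt G a) * (pl G c \<bullet> pt G b)))"
    unfolding triple_ratio_def by (simp add: e K_def algebra_simps)
  also have "\<dots> = triple_ratio G (a, b, c)" unfolding triple_ratio_def using K by simp
  finally show ?thesis .
qed

lemma tr_cyc: "triple_ratio F (k, i, j) = triple_ratio F (i, j, k)"
  by (simp add: triple_ratio_def mult_ac)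

lemma inv_mat1: "matrix_inv (mat 1 :: real^4^4) = mat 1"
proof -
  have "invertible (mat 1 :: real^4^4)" unfolding invertible_def by auto
  from inv_props(2)[OF this] show ?thesis by simp
qed

lemma inv_nz:
  assumes "invertible (B::real^4^4)" "x \<noteq> 0"
  shows "B *v x \<noteq> 0" "transpose (matrix_inv B) *v x \<noteq> 0"
proof -
  show "B *v x \<noteq> 0"
    using assms inv_props(2)[OF assms(1)]
    by (metis matrix_vector_mul_assoc matrix_vector_mul_lid matrix_vector_mult_0_right)
  have "transpose B ** transpose (matrix_inv B) = mat 1"
    by (simp add: matrix_transpose_mul[symmetric] inv_props(2)[OF assms(1)])
  then show "transpose (matrix_inv B) *v x \<noteq> 0"
    using assms(2) by (metis matrix_vector_mul_assoc matrix_vector_mul_lid matrix_vector_mult_0_right)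
qed

lemma proj_refl: "x \<noteq> 0 \<Longrightarrow> proj_eq x x"
  unfolding proj_eq_def by (rule conjI, simp, rule exI[of _ 1], simp)

lemma pgl_equiv_refl:
  assumes "tetrahedron_of_flags F" shows "pgl_equiv F F"
  unfolding pgl_equiv_def
proof (intro exI[of _ "mat 1"] conjI ballI)
  show "invertible (mat 1 :: real^4^4)" unfolding invertible_def by auto
  fix m :: nat assume "m \<in> {1..4}"
  then show "flag_eq (pgl_act (mat 1) F m) (F m)"
    using tet_nz[OF assms] by (simp add: flag_eq_def pgl_act_def inv_mat1 proj_refl pt_def[symmetric] pl_def[symmetric])
qed

lemma pgl_equiv_act:
  assumes "tetrahedron_of_flags E" "invertible B" shows "pgl_equiv E (pgl_act B E)"
  unfolding pgl_equiv_def
proof (intro exI[of _ B] conjI ballI)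
  show "invertible B" by fact
  fix m :: nat assume "m \<in> {1..4}"
  then show "flag_eq (pgl_act B E m) (pgl_act B E m)"
    using tet_nz[OF assms(1)] inv_nz[OF assms(2)] by (simp add: flag_eq_def pgl_act_def proj_refl)
qed




lemma frac_prod_one:
  fixes N1 D1 N2 D2 :: real
  assumes "D1 \<noteq> 0" "D2 \<noteq> 0" "N1 / D1 * (N2 / D2) = 1"
  shows "N1 * N2 = D1 * D2"
proof -
  have "N1 * N2 / (D1 * D2) = 1" using assms(3) by (simp only: times_divide_times_eq)
  moreover have nz: "D1 * D2 \<noteq> 0" using assms(1,2) by simp
  ultimately have "N1 * N2 = 1 * (D1 * D2)" using nonzero_divide_eq_eq[OF nz, of "N1*N2" 1] by blast
  then show ?thesis by (simp only: mult_1)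
qed

lemma pos_sum_nz: "(x::real) * y > 0 \<Longrightarrow> x + y \<noteq> 0"
proof
  assume "x * y > 0" "x + y = 0"
  then have "y = - x" by simp
  with \<open>x * y > 0\<close> have "- (x * x) > 0" by simp
  then show False using zero_le_square[of x] by linarith
qed

lemma in14: "(x::nat) \<in> {1..4} \<Longrightarrow> x = 1 \<or> x = 2 \<or> x = 3 \<or> x = 4"
  by (auto simp: atLeastAtMost_iff)

lemma four_idx:
  assumes "a\<in>{1..4}" "b\<in>{1..4}" "c\<in>{1..4}" "a\<noteq>b" "a\<noteq>c" "b\<noteq>c" "d = 10 - a - b - (c::nat)"
  shows "d\<in>{1..4}" "a\<noteq>d" "b\<noteq>d" "c\<noteq>d" "{1..4} = {a,b,c,d}"
proof -
  have A: "a = 1 \<or> a = 2 \<or> a = 3 \<or> a = 4" using in14[OF assms(1)] .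
  have B: "b = 1 \<or> b = 2 \<or> b = 3 \<or> b = 4" using in14[OF assms(2)] .
  have C: "c = 1 \<or> c = 2 \<or> c = 3 \<or> c = 4" using in14[OF assms(3)] .
  have all: "(d = 1 \<or> d = 2 \<or> d = 3 \<or> d = 4) \<and> a\<noteq>d \<and> b\<noteq>d \<and> c\<noteq>d"
    using A B C assms(4-7) by (elim disjE) simp_all
  then show "d\<in>{1..4}" "a\<noteq>d" "b\<noteq>d" "c\<noteq>d" by auto
  show "{1..4} = {a,b,c,d}"
  proof (intro equalityI subsetI)
    fix x assume "x \<in> {1..4::nat}"
    then have X: "x = 1 \<or> x = 2 \<or> x = 3 \<or> x = 4" by (rule in14)
    have "x = a \<or> x = b \<or> x = c \<or> x = d"
      using X A B C assms(4-7) by (elim disjE) simp_all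
    then show "x \<in> {a,b,c,d}" by blast
  next
    fix x assume "x \<in> {a,b,c,d}"
    then show "x \<in> {1..4}" using assms(1-3) all by auto
  qed
qed

lemma flag_helper:
  assumes "pt F a \<noteq> 0" "pl F a \<noteq> 0" "l \<noteq> 0" "m \<noteq> 0"
    "Bm *v pt E q = l *\<^sub>R pt F a" "transpose (matrix_inv Bm) *v pl E q = m *\<^sub>R pl F a"
  shows "flag_eq (F a) (pgl_act Bm E q)"
  unfolding flag_eq_def pgl_act_def proj_eq_def pt_def[symmetric] pl_def[symmetric] fst_conv snd_conv
  using assms by blast

lemma glue_iff:
  assumes TF: "tetrahedron_of_flags F" and TE: "tetrahedron_of_flags E"
    and ijk: "i\<in>{1..4}" "j\<in>{1..4}" "k\<in>{1..4}" "i\<noteq>j" "i\<noteq>k" "j\<noteq>k"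
    and ijk': "i'\<in>{1..4}" "j'\<in>{1..4}" "k'\<in>{1..4}" "i'\<noteq>j'" "i'\<noteq>k'" "j'\<noteq>k'"
  shows "glueable F E (i,j,k) (i',j',k') \<longleftrightarrow> triple_ratio F (i,j,k) * triple_ratio E (i',j',k') = 1"
proof
  let ?Z = "\<lambda>x y. pl E x \<bullet> pt E y"
  have Enz: "pl E x \<bullet> pt E y \<noteq> 0" if "x \<in> {i',j',k'}" "y \<in> {i',j',k'}" "x \<noteq> y" for x y
    using tet_nondeg[OF TE, of x y] that ijk' by auto
  have rev: "triple_ratio E (j',i',k') * triple_ratio E (i',j',k') = 1"
  proof -
    have n: "?Z i' j' \<noteq> 0" "?Z j' i' \<noteq> 0" "?Z i' k' \<noteq> 0" "?Z k' i' \<noteq> 0" "?Z j' k' \<noteq> 0" "?Z k' j' \<noteq> 0"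
      using Enz ijk' by auto
    show ?thesis unfolding triple_ratio_def using n by (simp add: field_simps)
  qed
  assume "glueable F E (i,j,k) (i',j',k')"
  then obtain F' E' where FF: "pgl_equiv F F'" and EE: "pgl_equiv E E'" and g: "glued F' E' (i,j,k) (i',j',k')"
    unfolding glueable_def by blast
  obtain A where A: "invertible A" "\<forall>m\<in>{1..4}. flag_eq (pgl_act A F m) (F' m)"
    using FF unfolding pgl_equiv_def by blast
  obtain B where B: "invertible B" "\<forall>m\<in>{1..4}. flag_eq (pgl_act B E m) (E' m)"
    using EE unfolding pgl_equiv_def by blast
  have "triple_ratio F' (i,j,k) = triple_ratio (pgl_act A F) (i,j,k)"
    by (rule tr_scale) (use A(2) ijk in \<open>auto simp: flag_eq_def pt_def pl_def\<close>)
  also have "\<dots> = triple_ratio F (i,j,k)" by (rule tr_pgl[OF A(1)])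
  finally have t1: "triple_ratio F' (i,j,k) = triple_ratio F (i,j,k)" .
  have "triple_ratio E' (j',i',k') = triple_ratio (pgl_act B E) (j',i',k')"
    by (rule tr_scale) (use B(2) ijk' in \<open>auto simp: flag_eq_def pt_def pl_def\<close>)
  also have "\<dots> = triple_ratio E (j',i',k')" by (rule tr_pgl[OF B(1)])
  finally have t2: "triple_ratio E' (j',i',k') = triple_ratio E (j',i',k')" .
  have "triple_ratio E' (j',i',k') = triple_ratio F' (i,j,k)"
    by (rule tr_scale) (use g in \<open>auto simp: glued_def flag_eq_def pt_def pl_def\<close>)
  then show "triple_ratio F (i,j,k) * triple_ratio E (i',j',k') = 1" using t1 t2 rev by simp
next
  assume hyp: "triple_ratio F (i,j,k) * triple_ratio E (i',j',k') = 1"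
  define a where "a = i" define b where "b = j" define c where "c = k"
  define a' where "a' = j'" define b' where "b' = i'" define c' where "c' = k'"
  define d where "d = 10 - a - b - c"
  define d' where "d' = 10 - a' - b' - c'"
  have abc: "a\<in>{1..4}" "b\<in>{1..4}" "c\<in>{1..4}" "a\<noteq>b" "a\<noteq>c" "b\<noteq>c"
    using ijk unfolding a_def b_def c_def by simp_all
  have abc': "a'\<in>{1..4}" "b'\<in>{1..4}" "c'\<in>{1..4}" "a'\<noteq>b'" "a'\<noteq>c'" "b'\<noteq>c'"
    using ijk' unfolding a'_def b'_def c'_def by simp_all
  note dd = four_idx[OF abc d_def]
  note dd' = four_idx[OF abc' d'_def]
  let ?h = "\<lambda>x y. pl F x \<bullet> pt F y" and ?Z = "\<lambda>x y. pl E x \<bullet> pt E y"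
  have hnz: "?h a b \<noteq> 0" "?h a c \<noteq> 0" "?h b a \<noteq> 0" "?h b c \<noteq> 0" "?h c a \<noteq> 0" "?h c b \<noteq> 0"
    using tet_nondeg[OF TF] abc by blast+
  have Znz: "?Z a' b' \<noteq> 0" "?Z a' c' \<noteq> 0" "?Z b' a' \<noteq> 0" "?Z b' c' \<noteq> 0" "?Z c' a' \<noteq> 0" "?Z c' b' \<noteq> 0"
    using tet_nondeg[OF TE] abc' by blast+
  have h0: "?h a a = 0" "?h b b = 0" "?h c c = 0" using tet_nondeg[OF TF] abc by blast+
  have Z0: "?Z a' a' = 0" "?Z b' b' = 0" "?Z c' c' = 0" using tet_nondeg[OF TE] abc' by blast+
  have hyp': "triple_ratio F (a,b,c) * triple_ratio E (b',a',c') = 1"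
    using hyp unfolding a_def b_def c_def a'_def b'_def c'_def .
  have tr: "?h a b * ?h b c * ?h c a * (?Z b' a' * ?Z a' c' * ?Z c' b') =
            ?h a c * ?h b a * ?h c b * (?Z b' c' * ?Z a' b' * ?Z c' a')"
    by (rule frac_prod_one) (use hyp' hnz Znz in \<open>simp_all add: triple_ratio_def\<close>)
  have det: "?h a b * ?h b c * ?h c a + ?h a c * ?h b a * ?h c b \<noteq> 0"
  proof (rule pos_sum_nz)
    have "?h a b * ?h b c * ?h c a * (?h a c * ?h c b * ?h b a) > 0" by (rule tet_det[OF TF abc])
    moreover have "?h a c * ?h c b * ?h b a = ?h a c * ?h b a * ?h c b" by (simp only: mult_ac)
    ultimately show "?h a b * ?h b c * ?h c a * (?h a c * ?h b a * ?h c b) > 0" by simp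
  qed
  note SC = solve_coeffs[OF hnz Znz tr det, where Zad = "?Z a' d'" and had = "?h a d" and Zbd = "?Z b' d'"
     and hbd = "?h b d" and Zcd = "?Z c' d'" and hcd = "?h c d"]
  obtain la lb lc ma mb mc ua ub uc where sol: "la\<noteq>0" "lb\<noteq>0" "lc\<noteq>0" "ma\<noteq>0" "mb\<noteq>0" "mc\<noteq>0"
    "?Z a' b' = ma*lb*?h a b" "?Z a' c' = ma*lc*?h a c" "?Z b' a' = mb*la*?h b a" "?Z b' c' = mb*lc*?h b c"
    "?Z c' a' = mc*la*?h c a" "?Z c' b' = mc*lb*?h c b"
    "?Z a' d' = ma*(ub*?h a b + uc*?h a c + ?h a d)" "?Z b' d' = mb*(ua*?h b a + uc*?h b c + ?h b d)"
    "?Z c' d' = mc*(ua*?h c a + ub*?h c b + ?h c d)"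
    by (rule SC)
  have indV: "x1 = 0 \<and> x2 = 0 \<and> x3 = 0 \<and> x4 = 0"
    if "x1 *\<^sub>R pt F a + x2 *\<^sub>R pt F b + x3 *\<^sub>R pt F c + x4 *\<^sub>R pt F d = 0" for x1 x2 x3 x4
    using tet_indep[OF TF dd(5) abc(4,5) dd(2) abc(6) dd(3,4) that] .
  have indW: "x1 = 0 \<and> x2 = 0 \<and> x3 = 0 \<and> x4 = 0"
    if "x1 *\<^sub>R pt E a' + x2 *\<^sub>R pt E b' + x3 *\<^sub>R pt E c' + x4 *\<^sub>R pt E d' = 0" for x1 x2 x3 x4
    using tet_indep[OF TE dd'(5) abc'(4,5) dd'(2) abc'(6) dd'(3,4) that] .
  have "\<exists>B. invertible B \<and> B *v pt E a' = la *\<^sub>R pt F a \<and> B *v pt E b' = lb *\<^sub>R pt F b \<and> B *v pt E c' = lc *\<^sub>R pt F c \<and>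
     transpose (matrix_inv B) *v pl E a' = ma *\<^sub>R pl F a \<and> transpose (matrix_inv B) *v pl E b' = mb *\<^sub>R pl F b \<and>
     transpose (matrix_inv B) *v pl E c' = mc *\<^sub>R pl F c"
    apply (rule exists_B[OF indV indW sol(1-3), where ua=ua and ub=ub and uc=uc])
    apply (simp_all only: inner_add_right inner_scaleR_right h0 Z0 sol(7-15))
    apply (simp_all add: algebra_simps sol(13-15))
    done
  then obtain Bm where Bm: "invertible Bm" "Bm *v pt E a' = la *\<^sub>R pt F a" "Bm *v pt E b' = lb *\<^sub>R pt F b"
     "Bm *v pt E c' = lc *\<^sub>R pt F c"
     "transpose (matrix_inv Bm) *v pl E a' = ma *\<^sub>R pl F a" "transpose (matrix_inv Bm) *v pl E b' = mb *\<^sub>R pl F b"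
     "transpose (matrix_inv Bm) *v pl E c' = mc *\<^sub>R pl F c"
    by blast
  have f1: "flag_eq (F a) (pgl_act Bm E a')"
    by (rule flag_helper[OF tet_nz[OF TF abc(1)] sol(1) sol(4) Bm(2) Bm(5)])
  have f2: "flag_eq (F b) (pgl_act Bm E b')"
    by (rule flag_helper[OF tet_nz[OF TF abc(2)] sol(2) sol(5) Bm(3) Bm(6)])
  have f3: "flag_eq (F c) (pgl_act Bm E c')"
    by (rule flag_helper[OF tet_nz[OF TF abc(3)] sol(3) sol(6) Bm(4) Bm(7)])
  have g: "glued F (pgl_act Bm E) (i,j,k) (i',j',k')"
    unfolding glued_def using f1 f2 f3 unfolding a_def b_def c_def a'_def b'_def c'_def by simp
  show "glueable F E (i,j,k) (i',j',k')"
    unfolding glueable_def using pgl_equiv_refl[OF TF] pgl_equiv_act[OF TE Bm(1)] g by blast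
qed

lemma ef_props:
  assumes "edge_face (i,j,k)"
  shows "i\<in>{1..4}" "j\<in>{1..4}" "k\<in>{1..4}" "i\<noteq>j" "i\<noteq>k" "j\<noteq>k"
proof -
  obtain p where p: "p permutes {1..4}" "p 1 = i" "p 2 = j" "p 3 = k"
    using assms unfolding edge_face_def by auto
  have inj: "inj p" using permutes_inj[OF p(1)] .
  have im: "p x \<in> {1..4}" if "x \<in> {1..4}" for x using permutes_in_image[OF p(1), of x] that by blast
  show "i\<in>{1..4}" using im[of 1] p(2) by simp
  show "j\<in>{1..4}" using im[of 2] p(3) by simp
  show "k\<in>{1..4}" using im[of 3] p(4) by simp
  have d: "p x = p y \<Longrightarrow> x = y" for x y using inj by (simp add: inj_eq)
  show "i\<noteq>j"
  proof
    assume "i = j" then have "p 1 = p 2" using p by simp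
    then have "(1::nat) = 2" by (rule d) then show False by simp
  qed
  show "i\<noteq>k"
  proof
    assume "i = k" then have "p 1 = p 3" using p by simp
    then have "(1::nat) = 3" by (rule d) then show False by simp
  qed
  show "j\<noteq>k"
  proof
    assume "j = k" then have "p 2 = p 3" using p by simp
    then have "(2::nat) = 3" by (rule d) then show False by simp
  qed
qed

lemma rot_cases:
  assumes "\<sigma>' \<in> {(i,j,k), ef_plus (i,j,k), ef_minus (i,j,k)}"
    and "i\<in>{1..4}" "j\<in>{1..4}" "k\<in>{1..4}" "i\<noteq>j" "i\<noteq>k" "j\<noteq>k"
  shows "\<exists>a b c. \<sigma>' = (a,b,c) \<and> a\<in>{1..4} \<and> b\<in>{1..4} \<and> c\<in>{1..4} \<and> a\<noteq>b \<and> a\<noteq>c \<and> b\<noteq>c \<and>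
     (\<forall>G. triple_ratio G \<sigma>' = triple_ratio G (i,j,k))"
proof -
  have "\<sigma>' = (i,j,k) \<or> \<sigma>' = (k,i,j) \<or> \<sigma>' = (j,k,i)"
    using assms(1) by (simp add: ef_plus_def ef_minus_def)
  then show ?thesis
  proof (elim disjE)
    assume "\<sigma>' = (i,j,k)" then show ?thesis using assms(2-7) by blast
  next
    assume e: "\<sigma>' = (k,i,j)"
    have "\<forall>G. triple_ratio G \<sigma>' = triple_ratio G (i,j,k)" unfolding e using tr_cyc by blast
    then show ?thesis using assms(2-7) e by blast
  next
    assume e: "\<sigma>' = (j,k,i)"
    have "\<forall>G. triple_ratio G \<sigma>' = triple_ratio G (i,j,k)"
    proof
      fix G show "triple_ratio G \<sigma>' = triple_ratio G (i,j,k)"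
        unfolding e using tr_cyc[of G j k i] tr_cyc[of G k i j] by simp
    qed
    then show ?thesis using assms(2-7) e by blast
  qed
qed

theorem lemma3p1:
  fixes F E :: flagquad and \<sigma> \<tau> :: "nat \<times> nat \<times> nat"
  assumes "edge_face \<sigma>" and "edge_face \<tau>"
    and "tetrahedron_of_flags F" and "tetrahedron_of_flags E"
  shows "(glueable F E \<sigma> \<tau> \<longleftrightarrow> triple_ratio F \<sigma> * triple_ratio E \<tau> = 1) \<and>
         (glueable F E \<sigma> \<tau> \<longrightarrow>
            (\<forall>\<sigma>'\<in>{\<sigma>, ef_plus \<sigma>, ef_minus \<sigma>}. \<forall>\<tau>'\<in>{\<tau>, ef_plus \<tau>, ef_minus \<tau>}.
               glueable F E \<sigma>' \<tau>'))"
proof -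
  obtain i j k where s: "\<sigma> = (i,j,k)" by (cases \<sigma>) auto
  obtain i' j' k' where t: "\<tau> = (i',j',k')" by (cases \<tau>) auto
  note e1 = ef_props[OF assms(1)[unfolded s]]
  note e2 = ef_props[OF assms(2)[unfolded t]]
  note G = glue_iff[OF assms(3,4)]
  have iff0: "glueable F E (i,j,k) (i',j',k') \<longleftrightarrow> triple_ratio F (i,j,k) * triple_ratio E (i',j',k') = 1"
    by (rule G[OF e1 e2])
  show ?thesis
  proof (intro conjI impI ballI)
    show "glueable F E \<sigma> \<tau> \<longleftrightarrow> triple_ratio F \<sigma> * triple_ratio E \<tau> = 1" unfolding s t by (rule iff0)
  next
    fix \<sigma>' \<tau>'
    assume g: "glueable F E \<sigma> \<tau>" and s': "\<sigma>' \<in> {\<sigma>, ef_plus \<sigma>, ef_minus \<sigma>}"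
      and t': "\<tau>' \<in> {\<tau>, ef_plus \<tau>, ef_minus \<tau>}"
    obtain a b c where A: "\<sigma>' = (a,b,c)" "a\<in>{1..4}" "b\<in>{1..4}" "c\<in>{1..4}" "a\<noteq>b" "a\<noteq>c" "b\<noteq>c"
       "\<forall>G. triple_ratio G \<sigma>' = triple_ratio G (i,j,k)"
      using rot_cases[OF s'[unfolded s] e1] by blast
    obtain a' b' c' where A': "\<tau>' = (a',b',c')" "a'\<in>{1..4}" "b'\<in>{1..4}" "c'\<in>{1..4}" "a'\<noteq>b'" "a'\<noteq>c'" "b'\<noteq>c'"
       "\<forall>G. triple_ratio G \<tau>' = triple_ratio G (i',j',k')"
      using rot_cases[OF t'[unfolded t] e2] by blast
    have p0: "triple_ratio F (i,j,k) * triple_ratio E (i',j',k') = 1"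
      using g iff0 unfolding s t by blast
    have "triple_ratio F (a,b,c) * triple_ratio E (a',b',c') = 1"
      using p0 A(1,8) A'(1,8) by metis
    then have "glueable F E (a,b,c) (a',b',c')"
      using G[OF A(2-7) A'(2-7)] by blast
    then show "glueable F E \<sigma>' \<tau>'" using A(1) A'(1) by simp
  qed
qed

end
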